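(* Let $a=0.68$, $b=0.1$, $\omega\in\mathbb{R}$ and $0<\varepsilon\le\frac12$, and consider the rotating Hénon map $F_\varepsilon:\mathbb{T}^1\times\mathbb{R}^2\to\mathbb{T}^1\times\mathbb{R}^2$, $$F_\varepsilon(\theta,x,y)=\big(\theta+\omega \ (\mathrm{mod}\ 1),\ 1+y-ax^2+\varepsilon\cos(2\pi\theta),\ bx\big).$$ Let $$x_-=\frac{-(1-b)-\sqrt{(1-b)^2+4a}}{2a},\qquad y_-=bx_-,$$ and $$U_\varepsilon=\mathbb{T}^1\times[x_--1.1\varepsilon,\,x_-+1.1\varepsilon]\times[y_--0.12\varepsilon,\,y_-+0.12\varepsilon].$$ Then there exists an invariant $C^0$ manifold of $F_\varepsilon$ which is homeomorphic to $\mathbb{T}^1$ and is contained in $U_\varepsilon$.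
   Context: $\mathbb{T}^1=\mathbb{R}/\mathbb{Z}$. The point $(x_-,y_-)$ is a fixed point of the Hénon map $(x,y)\mapsto(1+y-ax^2,bx)$ ($x_-\approx-2.0433$). *)

theory Defs
  imports "HOL-Analysis.Analysis"
begin

text \<open>The circle T^1 = R/Z is modelled by the unit circle in the complex plane,
  via the standard homeomorphism theta \<mapsto> cis (2 pi theta). Under it, rotation by
  omega becomes multiplication by cis (2 pi omega) and cos (2 pi theta) becomes Re z.\<close>

definition rot_henon :: "real \<Rightarrow> real \<Rightarrow> real \<Rightarrow> real \<Rightarrow>
    complex \<times> real \<times> real \<Rightarrow> complex \<times> real \<times> real" where
  "rot_henon a b \<omega> \<epsilon> = (\<lambda>(z, x, y). (cis (2 * pi * \<omega>) * z, 1 + y - a * x\<^sup>2 + \<epsilon> * Re z, b * x))"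

definition x_minus :: "real \<Rightarrow> real \<Rightarrow> real" where
  "x_minus a b = (- (1 - b) - sqrt ((1 - b)\<^sup>2 + 4 * a)) / (2 * a)"

definition y_minus :: "real \<Rightarrow> real \<Rightarrow> real" where
  "y_minus a b = b * x_minus a b"

definition U_eps :: "real \<Rightarrow> real \<Rightarrow> real \<Rightarrow> (complex \<times> real \<times> real) set" where
  "U_eps a b \<epsilon> = sphere (0::complex) 1 \<times>
     ({x_minus a b - 1.1 * \<epsilon> .. x_minus a b + 1.1 * \<epsilon>} \<times>
      {y_minus a b - 0.12 * \<epsilon> .. y_minus a b + 0.12 * \<epsilon>})"

end

theory Submission
  imports Defs
begin

lemma xm_facts: "-2.05 < x_minus 0.68 0.1 \<and> x_minus 0.68 0.1 < -2.04
   \<and> 0.68 * (x_minus 0.68 0.1)^2 = 1 + 0.1 * x_minus 0.68 0.1 - x_minus 0.68 0.1"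
proof -
  have s: "sqrt ((1 - 0.1)\<^sup>2 + 4 * 0.68) = sqrt 3.53" by (simp add: power2_eq_square)
  have l: "1.878 < sqrt (3.53::real)" by (rule real_less_rsqrt) (simp add: power2_eq_square)
  have u0: "3.53 < (1.879::real)^2" by (simp add: power2_eq_square)
  have u: "sqrt (3.53::real) < 1.879" using real_sqrt_less_mono[OF u0] by simp
  have q: "(sqrt (3.53::real))^2 = 3.53" by simp
  show ?thesis unfolding x_minus_def s using l u q
    by (simp add: power2_eq_square field_simps)
qed

lemma sqrt_diff_mul: "0 \<le> x \<Longrightarrow> 0 \<le> y \<Longrightarrow> \<bar>sqrt x - sqrt y\<bar> * (sqrt x + sqrt y) = \<bar>x - y\<bar>"
proof -
  assume "0 \<le> x" "0 \<le> y"
  then have "(sqrt x - sqrt y) * (sqrt x + sqrt y) = x - y"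
    by (simp add: algebra_simps)
  moreover have "sqrt x + sqrt y \<ge> 0" using \<open>0 \<le> x\<close> \<open>0 \<le> y\<close> by simp
  ultimately show ?thesis by (metis abs_mult abs_of_nonneg)
qed

lemma sqrt_ge_158: "2.5 \<le> x \<Longrightarrow> 1.58 \<le> sqrt x"
  by (rule real_le_rsqrt) (simp add: power2_eq_square)

lemma interval_step:
  fixes e u1 u2 c :: real
  defines "X \<equiv> x_minus 0.68 0.1"
  assumes e: "0 < e" "e \<le> 1/2"
    and u1: "\<bar>u1 - X\<bar> \<le> 1.1 * e" and u2: "\<bar>u2 - X\<bar> \<le> 1.1 * e" and c: "\<bar>c\<bar> \<le> 1"
  shows "2.5 \<le> (1 + 0.1 * u1 + e * c - u2) / 0.68"
    and "\<bar>- sqrt ((1 + 0.1 * u1 + e * c - u2) / 0.68) - X\<bar> \<le> 1.1 * e"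
proof -
  have xm: "-2.05 < X" "X < -2.04" "0.68 * X^2 = 1 + 0.1 * X - X" using xm_facts unfolding X_def by auto
  have ec: "\<bar>e * c\<bar> \<le> e" using c e by (simp add: abs_mult mult_left_le)
  define p where "p = (1 + 0.1 * u1 + e * c - u2) / 0.68"
  show p: "2.5 \<le> (1 + 0.1 * u1 + e * c - u2) / 0.68" using xm u1[unfolded abs_le_iff] u2[unfolded abs_le_iff] ec[unfolded abs_le_iff] e by (simp add: field_simps)
  have sp: "1.58 \<le> sqrt p" using p p_def sqrt_ge_158 by auto
  have sX: "sqrt (X^2) = - X" using xm by simp
  have d: "\<bar>p - X^2\<bar> \<le> 3.25 * e"
  proof -
    define N where "N = 0.1 * (u1 - X) + e * c - (u2 - X)"
    have e1: "p - X^2 = N / 0.68" unfolding p_def N_def using xm(3)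
      by (simp add: field_simps)
    have "\<bar>N\<bar> \<le> 2.21 * e" unfolding N_def using u1[unfolded abs_le_iff] u2[unfolded abs_le_iff] ec[unfolded abs_le_iff] unfolding abs_le_iff by (intro conjI; simp add: field_simps; linarith)
    moreover have "\<bar>p - X^2\<bar> = \<bar>N\<bar> / 0.68" unfolding e1 by (simp add: abs_divide)
    ultimately show ?thesis by (simp add: field_simps)
  qed
  have m: "\<bar>sqrt p - sqrt (X^2)\<bar> * (sqrt p + sqrt (X^2)) = \<bar>p - X^2\<bar>"
    using sqrt_diff_mul[of p "X^2"] p unfolding p_def by simp
  have "\<bar>sqrt p - sqrt (X^2)\<bar> * 3.62 \<le> \<bar>sqrt p - sqrt (X^2)\<bar> * (sqrt p + sqrt (X^2))"
    using sp sX xm by (intro mult_left_mono) auto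
  with m d have "\<bar>sqrt p - sqrt (X^2)\<bar> \<le> 1.1 * e" using e by (simp add: power2_eq_square[of 10])
  then have "\<bar>- sqrt p - X\<bar> \<le> 1.1 * e"
    using sX unfolding abs_le_iff by linarith
  then show "\<bar>- sqrt ((1 + 0.1 * u1 + e * c - u2) / 0.68) - X\<bar> \<le> 1.1 * e"
    unfolding p_def .
qed

lemma contr_step:
  fixes e u1 u2 v1 v2 c d :: real
  defines "X \<equiv> x_minus 0.68 0.1"
  assumes e: "0 < e" "e \<le> 1/2"
    and u1: "\<bar>u1 - X\<bar> \<le> 1.1 * e" and u2: "\<bar>u2 - X\<bar> \<le> 1.1 * e" and c: "\<bar>c\<bar> \<le> 1"
    and v1: "\<bar>v1 - X\<bar> \<le> 1.1 * e" and v2: "\<bar>v2 - X\<bar> \<le> 1.1 * e"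
    and d1: "\<bar>u1 - v1\<bar> \<le> d" and d2: "\<bar>u2 - v2\<bar> \<le> d"
  shows "\<bar>- sqrt ((1 + 0.1 * u1 + e * c - u2) / 0.68) - - sqrt ((1 + 0.1 * v1 + e * c - v2) / 0.68)\<bar> \<le> 0.52 * d"
proof -
  define p where "p = (1 + 0.1 * u1 + e * c - u2) / 0.68"
  define q where "q = (1 + 0.1 * v1 + e * c - v2) / 0.68"
  have p: "2.5 \<le> p" unfolding p_def using interval_step(1)[OF e u1[unfolded X_def] u2[unfolded X_def] c] .
  have q: "2.5 \<le> q" unfolding q_def using interval_step(1)[OF e v1[unfolded X_def] v2[unfolded X_def] c] .
  have sp: "1.58 \<le> sqrt p" "1.58 \<le> sqrt q" using p q sqrt_ge_158 by auto
  define N where "N = 0.1 * (u1 - v1) - (u2 - v2)"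
  have e1: "p - q = N / 0.68" unfolding p_def q_def N_def by (simp add: field_simps)
  have "\<bar>N\<bar> \<le> 1.1 * d" unfolding N_def using d1[unfolded abs_le_iff] d2[unfolded abs_le_iff] unfolding abs_le_iff by (intro conjI; simp add: field_simps; linarith)
  moreover have "\<bar>p - q\<bar> = \<bar>N\<bar> / 0.68" unfolding e1 by (simp add: abs_divide)
  ultimately have d: "\<bar>p - q\<bar> * 0.68 \<le> 1.1 * d" by (simp add: field_simps)
  have m: "\<bar>sqrt p - sqrt q\<bar> * (sqrt p + sqrt q) = \<bar>p - q\<bar>" using sqrt_diff_mul p q by simp
  have "\<bar>sqrt p - sqrt q\<bar> * 3.16 \<le> \<bar>sqrt p - sqrt q\<bar> * (sqrt p + sqrt q)"
    using sp by (intro mult_left_mono) auto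
  with m d have "\<bar>sqrt p - sqrt q\<bar> \<le> 0.52 * d" using d1 by (simp add: power2_eq_square[of 10])
  then show ?thesis unfolding p_def q_def by (simp add: abs_minus_commute)
qed

theorem mainTheorem8:
  fixes \<omega> \<epsilon> :: real
  assumes "0 < \<epsilon>" and "\<epsilon> \<le> 1/2"
  shows "\<exists>K :: (complex \<times> real \<times> real) set.
           rot_henon 0.68 0.1 \<omega> \<epsilon> ` K = K
         \<and> K homeomorphic sphere (0::complex) 1
         \<and> K \<subseteq> U_eps 0.68 0.1 \<epsilon>"
proof -
  note e = assms
  define X where "X = x_minus 0.68 0.1"
  define r where "r = cis (2 * pi * \<omega>)"
  define cl :: "complex \<Rightarrow> real" where "cl z = max (-1) (min 1 (Re z))" for z
  define \<Phi> :: "(complex \<Rightarrow> real) \<Rightarrow> complex \<Rightarrow> real" where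
    "\<Phi> f z = - sqrt ((1 + 0.1 * f (cnj r * z) + \<epsilon> * cl z - f (r * z)) / 0.68)" for f z
  define I where "I = {X - 1.1 * \<epsilon> .. X + 1.1 * \<epsilon>}"
  define S :: "(complex \<Rightarrow>\<^sub>C real) set" where "S = PiC UNIV (\<lambda>_. I)"
  define T where "T g = Bcontfun (\<Phi> (apply_bcontfun g))" for g
  have r1: "cnj r * r = 1" "r * cnj r = 1" unfolding r_def by (simp_all add: cis_cnj cis_mult)
  have normr: "norm r = 1" unfolding r_def by simp
  have clb: "\<bar>cl z\<bar> \<le> 1" for z unfolding cl_def by auto
  have inS: "g \<in> S \<longleftrightarrow> (\<forall>z. \<bar>apply_bcontfun g z - X\<bar> \<le> 1.1 * \<epsilon>)" for g
  proof -
    have "(x \<in> I) = (\<bar>x - X\<bar> \<le> 1.1 * \<epsilon>)" for x unfolding I_def atLeastAtMost_iff abs_le_iff by linarith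
    then show ?thesis unfolding S_def mem_PiC_iff Pi_def by auto
  qed
  have Phi_I: "\<bar>\<Phi> (apply_bcontfun g) z - X\<bar> \<le> 1.1 * \<epsilon>" if "g \<in> S" for g z
    unfolding \<Phi>_def X_def
    by (rule interval_step(2)[OF e]) (use that clb in \<open>auto simp: inS X_def\<close>)
  have cont: "continuous_on UNIV (\<lambda>z. apply_bcontfun g (c * z))" for g and c :: complex
    by (rule continuous_on_compose2[OF continuous_on_apply_bcontfun[of UNIV g]]) (auto intro!: continuous_intros)
  have contcl: "continuous_on UNIV cl" unfolding cl_def by (intro continuous_intros)
  have Phi_bc: "\<Phi> (apply_bcontfun g) \<in> bcontfun" if "g \<in> S" for g
  proof (rule bcontfun_normI)
    show "continuous_on UNIV (\<Phi> (apply_bcontfun g))"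
      unfolding \<Phi>_def by (intro continuous_intros cont contcl) simp
    show "norm (\<Phi> (apply_bcontfun g) z) \<le> \<bar>X\<bar> + 1.1 * \<epsilon>" for z
      using Phi_I[OF that, of z] abs_ge_self[of X] abs_ge_minus_self[of X] unfolding real_norm_def abs_le_iff by linarith
  qed
  have T_app: "apply_bcontfun (T g) = \<Phi> (apply_bcontfun g)" if "g \<in> S" for g
    unfolding T_def using Phi_bc[OF that] by (simp add: Bcontfun_inverse)
  have "\<exists>!u\<in>S. T u = u"
  proof (rule Banach_fix)
    show "complete S" unfolding complete_eq_closed S_def by (rule closed_PiC) (simp add: I_def)
    have "const_bcontfun X \<in> S" unfolding inS using e by simp
    then show "S \<noteq> {}" by blast
    show "T ` S \<subseteq> S" using Phi_I by (auto simp: inS T_app)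
    show "dist (T f) (T g) \<le> 0.52 * dist f g" if "f \<in> S" "g \<in> S" for f g
    proof (rule dist_bound)
      fix z
      have d: "\<bar>apply_bcontfun f w - apply_bcontfun g w\<bar> \<le> dist f g" for w
        using dist_bounded[of f w g] by (simp add: dist_real_def)
      show "dist (apply_bcontfun (T f) z) (apply_bcontfun (T g) z) \<le> 0.52 * dist f g"
        unfolding T_app[OF that(1)] T_app[OF that(2)] dist_real_def \<Phi>_def
        by (rule contr_step[OF e]) (use that clb d in \<open>auto simp: inS X_def\<close>)
    qed
  qed auto
  then obtain u where uS: "u \<in> S" and uT: "T u = u" by blast
  define v where "v = apply_bcontfun u"
  have ufix: "v z = \<Phi> v z" for z
    using T_app[OF uS] uT unfolding v_def by metis
  have vI: "\<bar>v z - X\<bar> \<le> 1.1 * \<epsilon>" for z using uS inS v_def by auto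
  have vcont: "continuous_on UNIV (\<lambda>z. v (c * z))" for c unfolding v_def by (rule cont)
  define g where "g z = (z, v z, 0.1 * v (cnj r * z))" for z
  define K where "K = g ` sphere 0 1"
  have Fg: "rot_henon 0.68 0.1 \<omega> \<epsilon> (g z) = g (r * z)" if "z \<in> sphere 0 1" for z
  proof -
    have cz: "cl z = Re z" unfolding cl_def using that abs_Re_le_cmod[of z] by (auto simp: abs_le_iff)
    define p where "p = (1 + 0.1 * v (cnj r * z) + \<epsilon> * cl z - v (r * z)) / 0.68"
    have pp: "2.5 \<le> p" unfolding p_def
      by (rule interval_step(1)[OF e]) (use vI clb in \<open>auto simp: X_def\<close>)
    have "v z = - sqrt p" using ufix[of z] unfolding \<Phi>_def p_def by simp
    then have "(v z)^2 = p" using pp by simp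
    then have "1 + 0.1 * v (cnj r * z) - 0.68 * (v z)^2 + \<epsilon> * Re z = v (r * z)"
      unfolding p_def cz by simp
    moreover have cc: "cnj r * (r * z) = z" using r1 by (simp add: mult.assoc[symmetric])
    ultimately show ?thesis unfolding g_def rot_henon_def r_def[symmetric] by (simp add: cc)
  qed
  have rS: "r * z \<in> sphere 0 1" if "z \<in> sphere 0 1" for z using that normr by (simp add: norm_mult)
  have rS': "cnj r * z \<in> sphere 0 1" if "z \<in> sphere 0 1" for z using that normr by (simp add: norm_mult)
  have inv: "rot_henon 0.68 0.1 \<omega> \<epsilon> ` K = K"
  proof
    show "rot_henon 0.68 0.1 \<omega> \<epsilon> ` K \<subseteq> K" unfolding K_def using Fg rS by auto
    show "K \<subseteq> rot_henon 0.68 0.1 \<omega> \<epsilon> ` K"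
    proof
      fix k assume "k \<in> K"
      then obtain w where w: "w \<in> sphere 0 1" "k = g w" unfolding K_def by auto
      have ww: "r * (cnj r * w) = w" using r1 by (simp add: mult.assoc[symmetric])
      have "k = rot_henon 0.68 0.1 \<omega> \<epsilon> (g (cnj r * w))" using Fg[OF rS'[OF w(1)]] w(2) unfolding ww by simp
      then show "k \<in> rot_henon 0.68 0.1 \<omega> \<epsilon> ` K" unfolding K_def using rS'[OF w(1)] by blast
    qed
  qed
  have hom: "K homeomorphic sphere (0::complex) 1"
  proof -
    have "homeomorphism (sphere 0 1) K g fst"
      unfolding homeomorphism_def K_def
    proof (intro conjI)
      have "continuous_on UNIV g" unfolding g_def
        using vcont[of 1] vcont[of "cnj r"]
        by (intro continuous_intros) auto
      then show "continuous_on (sphere 0 1) g" by (rule continuous_on_subset) simp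
      show "continuous_on (g ` sphere 0 1) fst" by (intro continuous_intros)
    qed (auto simp: g_def image_iff)
    then show ?thesis using homeomorphic_def homeomorphic_sym by blast
  qed
  have sub: "K \<subseteq> U_eps 0.68 0.1 \<epsilon>"
  proof
    fix k assume "k \<in> K"
    then obtain z where z: "z \<in> sphere 0 1" "k = g z" unfolding K_def by auto
    have a: "\<bar>v z - X\<bar> \<le> 1.1 * \<epsilon>" "\<bar>v (cnj r * z) - X\<bar> \<le> 1.1 * \<epsilon>" using vI by auto
    have b: "\<bar>0.1 * v (cnj r * z) - 0.1 * X\<bar> \<le> 0.12 * \<epsilon>"
      using a(2)[unfolded abs_le_iff] e unfolding abs_le_iff by (intro conjI; simp add: field_simps; linarith)
    show "k \<in> U_eps 0.68 0.1 \<epsilon>" unfolding U_eps_def y_minus_def z(2) g_def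
      using z(1) a(1)[unfolded abs_le_iff] b[unfolded abs_le_iff] unfolding X_def[symmetric] by (auto simp: field_simps)
  qed
  show ?thesis using inv hom sub by blast
qed

end
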